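(* For $m=7$ and for every integer $m\ge 10$ we have $\ell_m<(m-\ell_m)(m-\ell_m+1)$.
   Context: For integers $m\ge2$ and real $\ell\in(0,m]$, $f_m(\ell)=\frac1{\ell}\left(\binom{\ell}{2}+\binom{m-\ell+1}{2}\right)=\ell+\frac{m^2+m}{2\ell}-m-1$. Let $\lambda_m=\frac{\sqrt{2m^2+2m}}{2}$, and let $\ell_m\in\{\lfloor\lambda_m\rfloor,\lceil\lambda_m\rceil\}$ be such that $f_m(\ell_m)=\min\{f_m(\lfloor\lambda_m\rfloor),f_m(\lceil\lambda_m\rceil)\}$, with the convention that if $\lfloor\lambda_m\rfloor\ne\lceil\lambda_m\rceil$ and $f_m(\lfloor\lambda_m\rfloor)=f_m(\lceil\lambda_m\rceil)$, then $\ell_m=\lfloor\lambda_m\rfloor$. *)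

theory Defs
  imports Complex_Main
begin

definition f_m :: "nat \<Rightarrow> real \<Rightarrow> real" where
  "f_m m l = l + (real m ^ 2 + real m) / (2 * l) - real m - 1"

definition lambda_m :: "nat \<Rightarrow> real" where
  "lambda_m m = sqrt (2 * real m ^ 2 + 2 * real m) / 2"

definition ell_m :: "nat \<Rightarrow> int" where
  "ell_m m = (let a = \<lfloor>lambda_m m\<rfloor>; b = \<lceil>lambda_m m\<rceil> in
     if f_m m (of_int a) \<le> f_m m (of_int b) then a else b)"

end

theory Submission
  imports Defs
begin

lemma lam_sq: "(lambda_m m)^2 = (real m ^ 2 + real m) / 2"
  unfolding lambda_m_def by (simp add: power_divide)

lemma lam_nonneg: "lambda_m m \<ge> 0"
  unfolding lambda_m_def by simp

lemma floor_sq: "2 * (\<lfloor>lambda_m m\<rfloor>)^2 \<le> int m ^ 2 + int m"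
proof -
  let ?a = "\<lfloor>lambda_m m\<rfloor>"
  have a0: "?a \<ge> 0" using lam_nonneg by simp
  have "real_of_int ?a \<le> lambda_m m" by simp
  hence "(real_of_int ?a)^2 \<le> (lambda_m m)^2" using a0 by (intro power_mono) auto
  hence "2 * (real_of_int ?a)^2 \<le> real m ^ 2 + real m" using lam_sq by simp
  hence "real_of_int (2 * ?a^2) \<le> real_of_int (int m ^ 2 + int m)" by simp
  thus ?thesis by linarith
qed

lemma ell_cases: "ell_m m = \<lfloor>lambda_m m\<rfloor> \<or> ell_m m = \<lceil>lambda_m m\<rceil>"
  unfolding ell_m_def Let_def by auto

lemma ell_le: "ell_m m \<le> \<lfloor>lambda_m m\<rfloor> + 1"
proof -
  have "\<lceil>lambda_m m\<rceil> \<le> \<lfloor>lambda_m m\<rfloor> + 1" by linarith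
  thus ?thesis using ell_cases[of m] by auto
qed

lemma big:
  fixes a m k :: int
  assumes "2*a^2 \<le> m^2 + m" "a \<ge> 0" "m \<ge> 12" "l \<le> a + 1" "k = m - l"
  shows "l < k * (k+1)"
proof -
  have e1: "(140*a)^2 = 9800 * (2*a^2)" by (simp add: power2_eq_square)
  have e2: "(99*m+50)^2 = 9800*(m^2+m) + (m^2 + 100*m + 2500)" by (simp add: power2_eq_square algebra_simps)
  have "m^2 \<ge> 0" by simp
  moreover have "9800*(2*a^2) \<le> 9800*(m^2+m)" using assms(1) by simp
  ultimately have "(140*a)^2 \<le> (99*m+50)^2" unfolding e1 e2 using assms(1,3) by linarith
  hence h: "140*a \<le> 99*m+50" 
  proof (rule power2_le_imp_le)
    show "0 \<le> 99*m+50" using assms(3) by linarith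
  qed
  have k3: "k \<ge> 3" using h assms by linarith
  show ?thesis
  proof (cases "m \<le> 14")
    case True
    have "k*(k+1) \<ge> 3*4" using k3 by (intro mult_mono) auto
    thus ?thesis using h assms True by linarith
  next
    case False
    have "k*(k+1) \<ge> k*4" using k3 by (intro mult_left_mono) auto
    thus ?thesis using h assms False by linarith
  qed
qed

lemma fl_ce:
  fixes n m :: nat
  assumes "4*n^2 < 2*m^2+2*m" "2*m^2+2*m < 4*(n+1)^2"
  shows "\<lfloor>lambda_m m\<rfloor> = int n" "\<lceil>lambda_m m\<rceil> = int n + 1"
proof -
  have r1: "real (4*n^2) < real (2*m^2+2*m)" using assms(1) by (simp only: of_nat_less_iff)
  have r2: "real (2*m^2+2*m) < real (4*(n+1)^2)" using assms(2) by (simp only: of_nat_less_iff)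
  have s1: "2 * real n < sqrt (2 * real m ^ 2 + 2 * real m)"
  proof (rule real_less_rsqrt)
    show "(2 * real n)^2 < 2 * real m ^ 2 + 2 * real m" using r1 by (simp add: power_mult_distrib)
  qed
  have s2: "sqrt (2 * real m ^ 2 + 2 * real m) < 2 * (real n + 1)"
  proof (rule real_less_lsqrt)
    have "(2 * (real n + 1))^2 = real (4*(n+1)^2)" by (simp add: power2_eq_square algebra_simps)
    thus "2 * real m ^ 2 + 2 * real m < (2 * (real n + 1))^2" using r2 by simp
  qed auto
  have "real n < lambda_m m" "lambda_m m < real n + 1" using s1 s2 unfolding lambda_m_def by auto
  thus "\<lfloor>lambda_m m\<rfloor> = int n" "\<lceil>lambda_m m\<rceil> = int n + 1"
    by (simp_all add: floor_eq_iff ceiling_eq_iff)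
qed

lemma m7: "ell_m 7 = 5"
proof -
  have h1: "4*(5::nat)^2 < 2*7^2+2*7" "2*(7::nat)^2+2*7 < 4*(5+1)^2" by simp_all
  have a: "\<lfloor>lambda_m 7\<rfloor> = 5" "\<lceil>lambda_m 7\<rceil> = 6" using fl_ce[OF h1] by simp_all
  have "f_m 7 5 \<le> f_m 7 6" unfolding f_m_def by (simp add: field_simps)
  thus ?thesis unfolding ell_m_def Let_def a by simp
qed

lemma m10: "ell_m 10 = 7"
proof -
  have h1: "4*(7::nat)^2 < 2*10^2+2*10" "2*(10::nat)^2+2*10 < 4*(7+1)^2" by simp_all
  have a: "\<lfloor>lambda_m 10\<rfloor> = 7" "\<lceil>lambda_m 10\<rceil> = 8" using fl_ce[OF h1] by simp_all
  have "f_m 10 7 \<le> f_m 10 8" unfolding f_m_def by (simp add: field_simps)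
  thus ?thesis unfolding ell_m_def Let_def a by simp
qed

lemma m11: "ell_m 11 = 8"
proof -
  have h1: "4*(8::nat)^2 < 2*11^2+2*11" "2*(11::nat)^2+2*11 < 4*(8+1)^2" by simp_all
  have a: "\<lfloor>lambda_m 11\<rfloor> = 8" "\<lceil>lambda_m 11\<rceil> = 9" using fl_ce[OF h1] by simp_all
  have "f_m 11 8 \<le> f_m 11 9" unfolding f_m_def by (simp add: field_simps)
  thus ?thesis unfolding ell_m_def Let_def a by simp
qed

theorem proposition1p3:
  fixes m :: nat
  assumes "m = 7 \<or> m \<ge> 10"
  shows "ell_m m < (int m - ell_m m) * (int m - ell_m m + 1)"
proof -
  consider "m = 7" | "m = 10" | "m = 11" | "m \<ge> 12" using assms by linarith
  thus ?thesis
  proof cases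
    case 4
    have a0: "\<lfloor>lambda_m m\<rfloor> \<ge> 0" using lam_nonneg by simp
    have m12: "int m \<ge> 12" using 4 by linarith
    show ?thesis
      using big[OF floor_sq[of m] a0 m12 ell_le[of m], of "int m - ell_m m"] by blast
  next
    case 1 thus ?thesis using m7 by simp
  next
    case 2 thus ?thesis using m10 by simp
  next
    case 3 thus ?thesis using m11 by simp
  qed
qed

end
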